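(* Let $\tau$ be a nice vocabulary, $m,k\in\mathbb N$, and let $\mathfrak K$ be an $m$-ary $PW(k)$-class of $\tau$-structures. Then $\mathfrak K$ is $(m,0)$-constructible.
   Context: Vocabularies are finite and relational; a vocabulary is nice if every relation symbol has positive arity. $m$-ary $PW(k)$-class: for a nice $\tau$, a class $\mathfrak K$ of $\tau$-structures is an $m$-ary $PW(k)$-class if there are a vocabulary $\tau^+\supseteq\tau$ with $|\tau^+\setminus\tau|=k$ and every relation in $\tau^+\setminus\tau$ of arity at most $m$, and a finite set $\mathfrak P$ of $\tau^+$-structures, such that $\mathfrak K$ consists exactly of the $\tau$-reducts of structures in the closure of $\mathfrak P$ under: disjoint union; recoloring $\rho_{i\to j}$ (for unary auxiliary predicates, move all elements of $P_i$ to $P_j$); modifications $\delta_{R,B}$ (redefine a relation $R$ by a quantifier-free formula $B$ of $\tau^+$). A $k$-const structure is $(M,a_1,\dots,a_k)$ with $a_i\in|M|$. Addition operations $\mathfrak S_{\tau,k,k_1,k_2}$: an element $\mathbf s$ consists of sets $A_l\subseteq\{1,\dots,k_l\}$, injections $g_l:A_l\to\{1,\dots,k\}$ with disjoint images covering $\{1,\dots,k\}$, sets $B_l\subseteq\{1,\dots,k_l\}^2$, $B\subseteq\{1,\dots,k_1\}\times\{1,\dots,k_2\}$, and for each $R\in\tau$ of arity $n$ and $w_1,w_2\subseteq\{1,\dots,n\}$ a $\{\mathbb T,\mathbb F\}$-valued function $f_{R,w_1,w_2}$ on triples $(p,q_1,q_2)$ ($p$ a quantifier-free $n$-type in a vocabulary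 of $k_1+k_2$ constants and two unary predicates, $q_l$ a quantifier-free $\tau$-type in $(x_i)_{i\in w_l}$). For $k_l$-const $(M_l,\bar a^l)$ with $|M_1|\cap|M_2|\subseteq\{a^1_i\}\cap\{a^2_j\}$, $a^l_i=a^l_j\iff(i,j)\in B_l$, $a^1_i=a^2_j\iff(i,j)\in B$, the sum $M_1\circledast_{\mathbf s}M_2$ is the $k$-const structure with universe $(|M_1|\setminus\{a^1_i\})\cup(|M_2|\setminus\{a^2_i\})\cup\{a^l_i:i\in A_l\}$, constants $b_{g_l(i)}=a^l_i$, and $R(\bar x)$ given by $f_{R,w_1,w_2}(p,q_1,q_2)$ where $w_l=\{i:x_i\in|M_l|\}$, $p$ is the quantifier-free type of $\bar x$ over all constants $a^l_i$ and the predicates $|M_1|,|M_2|$, and $q_l$ the quantifier-free type of $(x_i)_{i\in w_l}$ in $M_l$. Empty structures $\mathrm{Null}_X$ are allowed. A class $\mathfrak K$ of $\tau$-structures is $(m^*,k^* )$-constructible if there are a finite relational $\tau^+\supseteq\tau$ with all relations in $\tau^+\setminus\tau$ of arity $\le m^*$, a finite set $\mathfrak P$ of $k$-const $\tau^+$-structures ($k\le k^*$), and a finite set $\mathfrak S$ of addition operations in $\mathfrak S_{\tau^+,k,k_1,k_2}$ with $k,k_1,k_2\le k^*$, such that $\mathfrak K$ is exactly the set of $\tau$-reducts of the closure of $\mathfrak P$ under $\mathfrak S$. *)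

theory Defs
  imports Main
begin

text \<open>A relation symbol is a pair (name, arity).
  Tuples are lists; all indices (variables, constants) are 0-based.\<close>

type_synonym sym = "nat \<times> nat"

definition ar :: "sym \<Rightarrow> nat" where
  "ar R = snd R"

definition vocab :: "sym set \<Rightarrow> bool" where
  "vocab \<sigma> \<longleftrightarrow> finite \<sigma>"

definition nice :: "sym set \<Rightarrow> bool" where
  "nice \<sigma> \<longleftrightarrow> vocab \<sigma> \<and> (\<forall>R\<in>\<sigma>. ar R > 0)"

record struc =
  univ :: "nat set"
  rel  :: "sym \<Rightarrow> nat list set"

definition is_struc :: "sym set \<Rightarrow> struc \<Rightarrow> bool" where
  "is_struc \<sigma> M \<longleftrightarrow> finite (univ M)
     \<and> (\<forall>R. rel M R \<subseteq> {xs. length xs = ar R \<and> set xs \<subseteq> univ M})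
     \<and> (\<forall>R. R \<notin> \<sigma> \<longrightarrow> rel M R = {})"

definition reduct :: "sym set \<Rightarrow> struc \<Rightarrow> struc" where
  "reduct \<sigma> M = \<lparr>univ = univ M, rel = (\<lambda>R. if R \<in> \<sigma> then rel M R else {})\<rparr>"

definition iso :: "(nat \<Rightarrow> nat) \<Rightarrow> struc \<Rightarrow> struc \<Rightarrow> bool" where
  "iso h M N \<longleftrightarrow> bij_betw h (univ M) (univ N) \<and> (\<forall>R. rel N R = map h ` rel M R)"

section \<open>Quantifier-free formulas (variables = tuple positions)\<close>

datatype qf = QTrue | QEq nat nat | QRel sym "nat list" | QNot qf | QAnd qf qf

fun qf_ok :: "sym set \<Rightarrow> nat \<Rightarrow> qf \<Rightarrow> bool" where
  "qf_ok \<sigma> n QTrue = True"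
| "qf_ok \<sigma> n (QEq i j) = (i < n \<and> j < n)"
| "qf_ok \<sigma> n (QRel R vs) = (R \<in> \<sigma> \<and> length vs = ar R \<and> (\<forall>v\<in>set vs. v < n))"
| "qf_ok \<sigma> n (QNot \<phi>) = qf_ok \<sigma> n \<phi>"
| "qf_ok \<sigma> n (QAnd \<phi> \<psi>) = (qf_ok \<sigma> n \<phi> \<and> qf_ok \<sigma> n \<psi>)"

fun qf_holds :: "struc \<Rightarrow> nat list \<Rightarrow> qf \<Rightarrow> bool" where
  "qf_holds M xs QTrue = True"
| "qf_holds M xs (QEq i j) = (xs ! i = xs ! j)"
| "qf_holds M xs (QRel R vs) = (map (\<lambda>v. xs ! v) vs \<in> rel M R)"
| "qf_holds M xs (QNot \<phi>) = (\<not> qf_holds M xs \<phi>)"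
| "qf_holds M xs (QAnd \<phi> \<psi>) = (qf_holds M xs \<phi> \<and> qf_holds M xs \<psi>)"

section \<open>PW(k)-classes\<close>

definition disj_union :: "struc \<Rightarrow> struc \<Rightarrow> struc" where
  "disj_union M N = \<lparr>univ = univ M \<union> univ N, rel = (\<lambda>R. rel M R \<union> rel N R)\<rparr>"

definition recolor :: "sym \<Rightarrow> sym \<Rightarrow> struc \<Rightarrow> struc" where
  "recolor P Q M = M\<lparr>rel := (rel M)(P := {}, Q := rel M P \<union> rel M Q)\<rparr>"

definition modify :: "sym \<Rightarrow> qf \<Rightarrow> struc \<Rightarrow> struc" where
  "modify R B M = M\<lparr>rel := (rel M)(R := {xs. length xs = ar R \<and> set xs \<subseteq> univ M \<and> qf_holds M xs B})\<rparr>"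

inductive_set pw_closure :: "sym set \<Rightarrow> sym set \<Rightarrow> struc set \<Rightarrow> struc set"
  for \<tau> \<tau>p :: "sym set" and P :: "struc set" where
  base: "M \<in> P \<Longrightarrow> M \<in> pw_closure \<tau> \<tau>p P"
| isom: "M \<in> pw_closure \<tau> \<tau>p P \<Longrightarrow> iso h M N \<Longrightarrow> N \<in> pw_closure \<tau> \<tau>p P"
| union: "M \<in> pw_closure \<tau> \<tau>p P \<Longrightarrow> N \<in> pw_closure \<tau> \<tau>p P \<Longrightarrow> univ M \<inter> univ N = {}
           \<Longrightarrow> disj_union M N \<in> pw_closure \<tau> \<tau>p P"
| recol: "M \<in> pw_closure \<tau> \<tau>p P \<Longrightarrow> Pi \<in> \<tau>p - \<tau> \<Longrightarrow> Pj \<in> \<tau>p - \<tau> \<Longrightarrow> ar Pi = 1 \<Longrightarrow> ar Pj = 1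
           \<Longrightarrow> recolor Pi Pj M \<in> pw_closure \<tau> \<tau>p P"
| modif: "M \<in> pw_closure \<tau> \<tau>p P \<Longrightarrow> R \<in> \<tau>p \<Longrightarrow> qf_ok \<tau>p (ar R) B
           \<Longrightarrow> modify R B M \<in> pw_closure \<tau> \<tau>p P"

definition PW_class :: "nat \<Rightarrow> nat \<Rightarrow> sym set \<Rightarrow> struc set \<Rightarrow> bool" where
  "PW_class m k \<tau> K \<longleftrightarrow> (\<exists>\<tau>p P. vocab \<tau>p \<and> \<tau> \<subseteq> \<tau>p \<and> card (\<tau>p - \<tau>) = k
      \<and> (\<forall>R\<in>\<tau>p - \<tau>. ar R \<le> m)
      \<and> finite P \<and> (\<forall>M\<in>P. is_struc \<tau>p M)
      \<and> K = reduct \<tau> ` pw_closure \<tau> \<tau>p P)"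

section \<open>Addition operations on k-const structures\<close>

type_synonym kstruc = "struc \<times> nat list"

definition is_kstruc :: "sym set \<Rightarrow> nat \<Rightarrow> kstruc \<Rightarrow> bool" where
  "is_kstruc \<sigma> k Mc \<longleftrightarrow> is_struc \<sigma> (fst Mc) \<and> length (snd Mc) = k \<and> set (snd Mc) \<subseteq> univ (fst Mc)"

text \<open>Atoms of quantifier-free types \<open>q\<close> (in the vocabulary of the summands, over tuple positions).\<close>
datatype tatom = TEq nat nat | TRel sym "nat list"

fun tatom_ok :: "sym set \<Rightarrow> nat set \<Rightarrow> tatom \<Rightarrow> bool" where
  "tatom_ok \<sigma> w (TEq i j) = (i \<in> w \<and> j \<in> w)"
| "tatom_ok \<sigma> w (TRel R vs) = (R \<in> \<sigma> \<and> length vs = ar R \<and> set vs \<subseteq> w)"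

fun tatom_holds :: "struc \<Rightarrow> nat list \<Rightarrow> tatom \<Rightarrow> bool" where
  "tatom_holds M xs (TEq i j) = (xs ! i = xs ! j)"
| "tatom_holds M xs (TRel R vs) = (map (\<lambda>v. xs ! v) vs \<in> rel M R)"

definition qtype :: "sym set \<Rightarrow> struc \<Rightarrow> nat list \<Rightarrow> nat set \<Rightarrow> tatom set" where
  "qtype \<sigma> M xs w = {a. tatom_ok \<sigma> w a \<and> tatom_holds M xs a}"

text \<open>Atoms of the types \<open>p\<close>: vocabulary of \<open>k1+k2\<close> constants and two unary predicates
  (membership in the universes of the two summands), with equality.\<close>
datatype pterm = PVar nat | PConst nat
datatype patom = PEq pterm pterm | PIn1 pterm | PIn2 pterm

fun pterm_ok :: "nat \<Rightarrow> nat \<Rightarrow> pterm \<Rightarrow> bool" where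
  "pterm_ok n kc (PVar i) = (i < n)"
| "pterm_ok n kc (PConst c) = (c < kc)"

fun patom_ok :: "nat \<Rightarrow> nat \<Rightarrow> patom \<Rightarrow> bool" where
  "patom_ok n kc (PEq s t) = (pterm_ok n kc s \<and> pterm_ok n kc t)"
| "patom_ok n kc (PIn1 t) = pterm_ok n kc t"
| "patom_ok n kc (PIn2 t) = pterm_ok n kc t"

fun pterm_val :: "nat list \<Rightarrow> nat list \<Rightarrow> nat list \<Rightarrow> pterm \<Rightarrow> nat" where
  "pterm_val c1 c2 xs (PVar i) = xs ! i"
| "pterm_val c1 c2 xs (PConst c) = (if c < length c1 then c1 ! c else c2 ! (c - length c1))"

fun patom_holds :: "kstruc \<Rightarrow> kstruc \<Rightarrow> nat list \<Rightarrow> patom \<Rightarrow> bool" where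
  "patom_holds (M1, c1) (M2, c2) xs (PEq s t) = (pterm_val c1 c2 xs s = pterm_val c1 c2 xs t)"
| "patom_holds (M1, c1) (M2, c2) xs (PIn1 t) = (pterm_val c1 c2 xs t \<in> univ M1)"
| "patom_holds (M1, c1) (M2, c2) xs (PIn2 t) = (pterm_val c1 c2 xs t \<in> univ M2)"

definition ptype :: "kstruc \<Rightarrow> kstruc \<Rightarrow> nat list \<Rightarrow> patom set" where
  "ptype Mc1 Mc2 xs = {a. patom_ok (length xs) (length (snd Mc1) + length (snd Mc2)) a
                           \<and> patom_holds Mc1 Mc2 xs a}"

definition wset :: "struc \<Rightarrow> nat list \<Rightarrow> nat set" where
  "wset M xs = {i. i < length xs \<and> xs ! i \<in> univ M}"

text \<open>An addition operation \<open>s \<in> S_{\<tau>,k,k1,k2}\<close>; \<open>ff R w1 w2 p q1 q2\<close> is \<open>f_{R,w1,w2}(p,q1,q2)\<close>.\<close>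
record addop =
  ak  :: nat
  ak1 :: nat
  ak2 :: nat
  aA1 :: "nat set"
  aA2 :: "nat set"
  ag1 :: "nat \<Rightarrow> nat"
  ag2 :: "nat \<Rightarrow> nat"
  aB1 :: "(nat \<times> nat) set"
  aB2 :: "(nat \<times> nat) set"
  aB  :: "(nat \<times> nat) set"
  ff  :: "sym \<Rightarrow> nat set \<Rightarrow> nat set \<Rightarrow> patom set \<Rightarrow> tatom set \<Rightarrow> tatom set \<Rightarrow> bool"

definition addop_wf :: "addop \<Rightarrow> bool" where
  "addop_wf s \<longleftrightarrow> aA1 s \<subseteq> {..<ak1 s} \<and> aA2 s \<subseteq> {..<ak2 s}
     \<and> inj_on (ag1 s) (aA1 s) \<and> inj_on (ag2 s) (aA2 s)
     \<and> ag1 s ` aA1 s \<inter> ag2 s ` aA2 s = {}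
     \<and> ag1 s ` aA1 s \<union> ag2 s ` aA2 s = {..<ak s}
     \<and> aB1 s \<subseteq> {..<ak1 s} \<times> {..<ak1 s} \<and> aB2 s \<subseteq> {..<ak2 s} \<times> {..<ak2 s}
     \<and> aB s \<subseteq> {..<ak1 s} \<times> {..<ak2 s}"

definition applicable :: "addop \<Rightarrow> kstruc \<Rightarrow> kstruc \<Rightarrow> bool" where
  "applicable s Mc1 Mc2 \<longleftrightarrow>
     (let M1 = fst Mc1; c1 = snd Mc1; M2 = fst Mc2; c2 = snd Mc2 in
       length c1 = ak1 s \<and> length c2 = ak2 s
     \<and> univ M1 \<inter> univ M2 \<subseteq> set c1 \<inter> set c2
     \<and> (\<forall>i<ak1 s. \<forall>j<ak1 s. c1 ! i = c1 ! j \<longleftrightarrow> (i, j) \<in> aB1 s)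
     \<and> (\<forall>i<ak2 s. \<forall>j<ak2 s. c2 ! i = c2 ! j \<longleftrightarrow> (i, j) \<in> aB2 s)
     \<and> (\<forall>i<ak1 s. \<forall>j<ak2 s. c1 ! i = c2 ! j \<longleftrightarrow> (i, j) \<in> aB s))"

definition add_univ :: "addop \<Rightarrow> kstruc \<Rightarrow> kstruc \<Rightarrow> nat set" where
  "add_univ s Mc1 Mc2 =
     (univ (fst Mc1) - set (snd Mc1)) \<union> (univ (fst Mc2) - set (snd Mc2))
     \<union> (\<lambda>i. snd Mc1 ! i) ` aA1 s \<union> (\<lambda>i. snd Mc2 ! i) ` aA2 s"

definition add_sum :: "sym set \<Rightarrow> addop \<Rightarrow> kstruc \<Rightarrow> kstruc \<Rightarrow> kstruc" where
  "add_sum \<sigma> s Mc1 Mc2 =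
     (let M1 = fst Mc1; c1 = snd Mc1; M2 = fst Mc2; c2 = snd Mc2; U = add_univ s Mc1 Mc2 in
      (\<lparr>univ = U,
        rel = (\<lambda>R. if R \<in> \<sigma> then
                 {xs. length xs = ar R \<and> set xs \<subseteq> U
                    \<and> ff s R (wset M1 xs) (wset M2 xs) (ptype Mc1 Mc2 xs)
                         (qtype \<sigma> M1 xs (wset M1 xs)) (qtype \<sigma> M2 xs (wset M2 xs))}
               else {})\<rparr>,
       map (\<lambda>j. if j \<in> ag1 s ` aA1 s then c1 ! (inv_into (aA1 s) (ag1 s) j)
                 else c2 ! (inv_into (aA2 s) (ag2 s) j)) [0..<ak s]))"

definition kiso :: "(nat \<Rightarrow> nat) \<Rightarrow> kstruc \<Rightarrow> kstruc \<Rightarrow> bool" where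
  "kiso h Mc Nc \<longleftrightarrow> iso h (fst Mc) (fst Nc) \<and> snd Nc = map h (snd Mc)"

inductive_set add_closure :: "sym set \<Rightarrow> kstruc set \<Rightarrow> addop set \<Rightarrow> kstruc set"
  for \<sigma> :: "sym set" and P :: "kstruc set" and S :: "addop set" where
  base: "Mc \<in> P \<Longrightarrow> Mc \<in> add_closure \<sigma> P S"
| isom: "Mc \<in> add_closure \<sigma> P S \<Longrightarrow> kiso h Mc Nc \<Longrightarrow> Nc \<in> add_closure \<sigma> P S"
| add: "s \<in> S \<Longrightarrow> Mc1 \<in> add_closure \<sigma> P S \<Longrightarrow> Mc2 \<in> add_closure \<sigma> P S
         \<Longrightarrow> applicable s Mc1 Mc2 \<Longrightarrow> add_sum \<sigma> s Mc1 Mc2 \<in> add_closure \<sigma> P S"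

definition constructible :: "nat \<Rightarrow> nat \<Rightarrow> sym set \<Rightarrow> struc set \<Rightarrow> bool" where
  "constructible m k \<tau> K \<longleftrightarrow> (\<exists>\<tau>p P S. vocab \<tau>p \<and> \<tau> \<subseteq> \<tau>p
      \<and> (\<forall>R\<in>\<tau>p - \<tau>. ar R \<le> m)
      \<and> finite P \<and> (\<forall>Mc\<in>P. \<exists>k0\<le>k. is_kstruc \<tau>p k0 Mc)
      \<and> finite S \<and> (\<forall>s\<in>S. addop_wf s \<and> ak s \<le> k \<and> ak1 s \<le> k \<and> ak2 s \<le> k)
      \<and> K = (\<lambda>Mc. reduct \<tau> (fst Mc)) ` add_closure \<tau>p P S)"

end

theory Submission
  imports Defs
begin


definition reinterp :: "sym set \<Rightarrow> (sym \<Rightarrow> qf) \<Rightarrow> struc \<Rightarrow> struc" where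
 "reinterp \<sigma> \<phi> M = \<lparr>univ = univ M, rel = (\<lambda>R. if R \<in> \<sigma> then {xs. length xs = ar R \<and> set xs \<subseteq> univ M \<and> qf_holds M xs (\<phi> R)} else {})\<rparr>"

definition phi_wf :: "sym set \<Rightarrow> (sym \<Rightarrow> qf) \<Rightarrow> bool" where
 "phi_wf \<sigma> \<phi> = (\<forall>R\<in>\<sigma>. qf_ok \<sigma> (ar R) (\<phi> R))"

fun qren :: "nat list \<Rightarrow> qf \<Rightarrow> qf" where
  "qren vs QTrue = QTrue"
| "qren vs (QEq i j) = QEq (vs!i) (vs!j)"
| "qren vs (QRel R us) = QRel R (map (\<lambda>u. vs!u) us)"
| "qren vs (QNot a) = QNot (qren vs a)"
| "qren vs (QAnd a b) = QAnd (qren vs a) (qren vs b)"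

lemma map_nth_map: "\<forall>v\<in>set us. v < length vs \<Longrightarrow> map (\<lambda>u. map f vs ! u) us = map (\<lambda>u. f (vs ! u)) us"
  by (induction us) auto

lemma qren_holds: "qf_ok \<sigma> (length vs) \<psi> \<Longrightarrow> qf_holds M xs (qren vs \<psi>) = qf_holds M (map (\<lambda>v. xs!v) vs) \<psi>"
  by (induction \<psi>) (auto simp: map_nth_map comp_def)

lemma qren_ok: "qf_ok \<sigma> (length vs) \<psi> \<Longrightarrow> \<forall>v\<in>set vs. v < n \<Longrightarrow> qf_ok \<sigma> n (qren vs \<psi>)"
  by (induction \<psi>) auto

fun qsub :: "(sym \<Rightarrow> qf) \<Rightarrow> qf \<Rightarrow> qf" where
  "qsub \<phi> QTrue = QTrue"
| "qsub \<phi> (QEq i j) = QEq i j"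
| "qsub \<phi> (QRel R vs) = qren vs (\<phi> R)"
| "qsub \<phi> (QNot a) = QNot (qsub \<phi> a)"
| "qsub \<phi> (QAnd a b) = QAnd (qsub \<phi> a) (qsub \<phi> b)"

lemma qsub_ok: "phi_wf \<sigma> \<phi> \<Longrightarrow> qf_ok \<sigma> n B \<Longrightarrow> qf_ok \<sigma> n (qsub \<phi> B)"
  by (induction B) (auto simp: phi_wf_def intro: qren_ok)

lemma qsub_holds: "phi_wf \<sigma> \<phi> \<Longrightarrow> qf_ok \<sigma> (length xs) B \<Longrightarrow> set xs \<subseteq> univ M
   \<Longrightarrow> qf_holds (reinterp \<sigma> \<phi> M) xs B = qf_holds M xs (qsub \<phi> B)"
proof (induction B)
  case (QRel R vs)
  have ok: "qf_ok \<sigma> (length vs) (\<phi> R)" using QRel by (auto simp: phi_wf_def)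
  have st: "set (map (\<lambda>v. xs!v) vs) \<subseteq> univ M" using QRel.prems by (auto simp: subset_iff)
  have R: "R \<in> \<sigma>" "length vs = ar R" using QRel.prems by auto
  have "qf_holds (reinterp \<sigma> \<phi> M) xs (QRel R vs) \<longleftrightarrow> map (\<lambda>v. xs!v) vs \<in> rel (reinterp \<sigma> \<phi> M) R"
    by simp
  also have "\<dots> \<longleftrightarrow> qf_holds M (map (\<lambda>v. xs!v) vs) (\<phi> R)"
    using R st by (simp add: reinterp_def)
  also have "\<dots> \<longleftrightarrow> qf_holds M xs (qsub \<phi> (QRel R vs))"
    using qren_holds[OF ok] by simp
  finally show ?case .
qed auto

lemma is_strucD:
  assumes "is_struc \<sigma> M"
  shows "finite (univ M)" "xs \<in> rel M R \<Longrightarrow> length xs = ar R" "xs \<in> rel M R \<Longrightarrow> set xs \<subseteq> univ M"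
    "R \<notin> \<sigma> \<Longrightarrow> rel M R = {}"
  using assms unfolding is_struc_def by blast+

lemma map_nth_len: "length x = n \<Longrightarrow> map ((!) x) [0..<n] = x"
  using map_nth[of x] by simp

lemma reinterp_id: "is_struc \<sigma> M \<Longrightarrow> reinterp \<sigma> (\<lambda>R. QRel R [0..<ar R]) M = M"
proof -
  assume a: "is_struc \<sigma> M"
  have r: "(if R \<in> \<sigma> then {xs. length xs = ar R \<and> set xs \<subseteq> univ M \<and> qf_holds M xs (QRel R [0..<ar R])} else {}) = rel M R" for R
  proof (cases "R \<in> \<sigma>")
    case True
    have iff: "x \<in> rel M R \<longleftrightarrow> length x = ar R \<and> set x \<subseteq> univ M \<and> qf_holds M x (QRel R [0..<ar R])" for x
    proof
      assume "x \<in> rel M R"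
      moreover have l: "length x = ar R" using is_strucD(2)[OF a] \<open>x \<in> rel M R\<close> by blast
      moreover have "map ((!) x) [0..<ar R] = x" using l by (rule map_nth_len)
      ultimately show "length x = ar R \<and> set x \<subseteq> univ M \<and> qf_holds M x (QRel R [0..<ar R])"
        using is_strucD(3)[OF a] by simp
    next
      assume "length x = ar R \<and> set x \<subseteq> univ M \<and> qf_holds M x (QRel R [0..<ar R])"
      then show "x \<in> rel M R" using map_nth_len[of x "ar R"] by simp
    qed
    have "{x. length x = ar R \<and> set x \<subseteq> univ M \<and> qf_holds M x (QRel R [0..<ar R])} = rel M R"
      using iff by blast
    then show ?thesis using True by (simp only: if_True)
  next
    case False
    then show ?thesis using is_strucD(4)[OF a, of R] by simp
  qed
  show ?thesis by (intro struc.equality) (simp_all add: r reinterp_def)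
qed

lemma reinterp_id_wf: "phi_wf \<sigma> (\<lambda>R. QRel R [0..<ar R])"
  by (auto simp: phi_wf_def)

lemma reinterp_upd: "(reinterp \<sigma> \<phi> M)\<lparr>rel := rel (reinterp \<sigma> \<psi> M)\<rparr> = reinterp \<sigma> \<psi> M"
  unfolding reinterp_def by simp

lemma modify_reinterp:
  assumes wf: "phi_wf \<sigma> \<phi>" and R: "R \<in> \<sigma>" and ok: "qf_ok \<sigma> (ar R) B"
  shows "modify R B (reinterp \<sigma> \<phi> M) = reinterp \<sigma> (\<phi>(R := qsub \<phi> B)) M"
proof -
  have u: "univ (reinterp \<sigma> \<phi> M) = univ M" by (simp add: reinterp_def)
  have c: "{xs. length xs = ar R \<and> set xs \<subseteq> univ M \<and> qf_holds (reinterp \<sigma> \<phi> M) xs B}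
     = {xs. length xs = ar R \<and> set xs \<subseteq> univ M \<and> qf_holds M xs (qsub \<phi> B)}"
  proof (rule Collect_cong)
    fix xs show "(length xs = ar R \<and> set xs \<subseteq> univ M \<and> qf_holds (reinterp \<sigma> \<phi> M) xs B) =
       (length xs = ar R \<and> set xs \<subseteq> univ M \<and> qf_holds M xs (qsub \<phi> B))"
      using qsub_holds[OF wf, of xs B M] ok by auto
  qed
  have r: "(rel (reinterp \<sigma> \<phi> M))(R := {xs. length xs = ar R \<and> set xs \<subseteq> univ M \<and> qf_holds (reinterp \<sigma> \<phi> M) xs B})
     = rel (reinterp \<sigma> (\<phi>(R := qsub \<phi> B)) M)"
  proof
    fix R' show "((rel (reinterp \<sigma> \<phi> M))(R := {xs. length xs = ar R \<and> set xs \<subseteq> univ M \<and> qf_holds (reinterp \<sigma> \<phi> M) xs B})) R'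
     = rel (reinterp \<sigma> (\<phi>(R := qsub \<phi> B)) M) R'"
      using c R by (cases "R' = R") (simp_all add: reinterp_def)
  qed
  show ?thesis unfolding modify_def u r by (rule reinterp_upd)
qed



definition qor :: "qf \<Rightarrow> qf \<Rightarrow> qf" where
  "qor a b = QNot (QAnd (QNot a) (QNot b))"

lemma recolor_reinterp: "Pi \<in> \<sigma> \<Longrightarrow> Pj \<in> \<sigma> \<Longrightarrow> ar Pi = 1 \<Longrightarrow> ar Pj = 1 \<Longrightarrow>
   recolor Pi Pj (reinterp \<sigma> \<phi> M) = reinterp \<sigma> (\<phi>(Pi := QNot QTrue, Pj := qor (\<phi> Pi) (\<phi> Pj))) M"
  unfolding recolor_def
  apply (simp add: reinterp_def)
  apply (rule ext)
  apply (auto simp: qor_def)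
  done

lemma phi_wf_mod: "phi_wf \<sigma> \<phi> \<Longrightarrow> qf_ok \<sigma> (ar R) B \<Longrightarrow> phi_wf \<sigma> (\<phi>(R := qsub \<phi> B))"
  by (auto simp: phi_wf_def intro: qsub_ok)

lemma phi_wf_rec: "phi_wf \<sigma> \<phi> \<Longrightarrow> Pi \<in> \<sigma> \<Longrightarrow> Pj \<in> \<sigma> \<Longrightarrow> ar Pi = 1 \<Longrightarrow> ar Pj = 1 \<Longrightarrow>
    phi_wf \<sigma> (\<phi>(Pi := QNot QTrue, Pj := qor (\<phi> Pi) (\<phi> Pj)))"
  by (auto simp: phi_wf_def qor_def)

datatype uop = URec sym sym | UMod sym qf

fun uop_ok :: "sym set \<Rightarrow> sym set \<Rightarrow> uop \<Rightarrow> bool" where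
  "uop_ok \<tau> \<tau>p (URec Pi Pj) = (Pi \<in> \<tau>p - \<tau> \<and> Pj \<in> \<tau>p - \<tau> \<and> ar Pi = 1 \<and> ar Pj = 1)"
| "uop_ok \<tau> \<tau>p (UMod R B) = (R \<in> \<tau>p \<and> qf_ok \<tau>p (ar R) B)"

fun apply_uop :: "uop \<Rightarrow> struc \<Rightarrow> struc" where
  "apply_uop (URec Pi Pj) M = recolor Pi Pj M"
| "apply_uop (UMod R B) M = modify R B M"

definition apply_uops :: "uop list \<Rightarrow> struc \<Rightarrow> struc" where
  "apply_uops ops M = fold apply_uop ops M"

lemma uops_rep: "\<forall>u\<in>set ops. uop_ok \<tau> \<tau>p u \<Longrightarrow>
   \<exists>\<phi>. phi_wf \<tau>p \<phi> \<and> (\<forall>M. is_struc \<tau>p M \<longrightarrow> apply_uops ops M = reinterp \<tau>p \<phi> M)"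
proof (induction ops rule: rev_induct)
  case Nil
  show ?case using reinterp_id[of \<tau>p] reinterp_id_wf[of \<tau>p]
    by (intro exI[of _ "\<lambda>R. QRel R [0..<ar R]"]) (auto simp: apply_uops_def)
next
  case (snoc u ops)
  then obtain \<phi> where wf: "phi_wf \<tau>p \<phi>" and rep: "\<forall>M. is_struc \<tau>p M \<longrightarrow> apply_uops ops M = reinterp \<tau>p \<phi> M"
    by auto
  have uok: "uop_ok \<tau> \<tau>p u" using snoc by auto
  show ?case
  proof (cases u)
    case (URec Pi Pj)
    define \<psi> where "\<psi> = \<phi>(Pi := QNot QTrue, Pj := qor (\<phi> Pi) (\<phi> Pj))"
    have "phi_wf \<tau>p \<psi>" unfolding \<psi>_def using uok URec by (intro phi_wf_rec[OF wf]) auto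
    moreover have "apply_uops (ops @ [u]) M = reinterp \<tau>p \<psi> M" if "is_struc \<tau>p M" for M
      using that rep recolor_reinterp[of Pi \<tau>p Pj \<phi> M] uok URec unfolding \<psi>_def by (simp add: apply_uops_def)
    ultimately show ?thesis by blast
  next
    case (UMod R B)
    define \<psi> where "\<psi> = \<phi>(R := qsub \<phi> B)"
    have "phi_wf \<tau>p \<psi>" unfolding \<psi>_def using uok UMod by (intro phi_wf_mod[OF wf]) auto
    moreover have "apply_uops (ops @ [u]) M = reinterp \<tau>p \<psi> M" if "is_struc \<tau>p M" for M
      using that rep modify_reinterp[OF wf, of R B M] uok UMod unfolding \<psi>_def by (simp add: apply_uops_def)
    ultimately show ?thesis by blast
  qed
qed

lemma univ_apply_uops: "univ (apply_uops ops M) = univ M"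
  unfolding apply_uops_def
proof (induction ops arbitrary: M)
  case (Cons u ops)
  then show ?case by (cases u) (auto simp: recolor_def modify_def)
qed simp

lemma is_strucI: "finite (univ M) \<Longrightarrow> (\<And>R xs. xs \<in> rel M R \<Longrightarrow> length xs = ar R \<and> set xs \<subseteq> univ M)
   \<Longrightarrow> (\<And>R. R \<notin> \<sigma> \<Longrightarrow> rel M R = {}) \<Longrightarrow> is_struc \<sigma> M"
  unfolding is_struc_def by blast

lemma pw_struc: "M \<in> pw_closure \<tau> \<tau>p P \<Longrightarrow> \<forall>M\<in>P. is_struc \<tau>p M \<Longrightarrow> is_struc \<tau>p M"
proof (induction rule: pw_closure.induct)
  case (base M)
  then show ?case by auto
next
  case (isom M h N)
  then have s: "is_struc \<tau>p M" by auto
  have b: "bij_betw h (univ M) (univ N)" and r: "\<And>R. rel N R = map h ` rel M R" using isom by (auto simp: iso_def)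
  have "finite (univ N)" using b is_strucD(1)[OF s] bij_betw_finite by blast
  moreover have "rel N R \<subseteq> {xs. length xs = ar R \<and> set xs \<subseteq> univ N}" for R
  proof
    fix ys assume "ys \<in> rel N R"
    then obtain xs where xs: "xs \<in> rel M R" and ys: "ys = map h xs" using r[of R] by blast
    have "length xs = ar R" "set xs \<subseteq> univ M" using is_strucD(2,3)[OF s xs] by auto
    then show "ys \<in> {xs. length xs = ar R \<and> set xs \<subseteq> univ N}"
      using ys bij_betw_imp_surj_on[OF b] by auto
  qed
  moreover have "R \<notin> \<tau>p \<Longrightarrow> rel N R = {}" for R using r[of R] is_strucD(4)[OF s] by auto
  ultimately show ?case unfolding is_struc_def by blast
next
  case (union M N)
  then have s1: "is_struc \<tau>p M" and s2: "is_struc \<tau>p N" by auto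
  show ?case
  proof (rule is_strucI)
    show "finite (univ (disj_union M N))" using is_strucD(1)[OF s1] is_strucD(1)[OF s2] by (simp add: disj_union_def)
  next
    fix R xs assume "xs \<in> rel (disj_union M N) R"
    then have "xs \<in> rel M R \<or> xs \<in> rel N R" by (simp add: disj_union_def)
    then show "length xs = ar R \<and> set xs \<subseteq> univ (disj_union M N)"
      using is_strucD(2,3)[OF s1, of xs R] is_strucD(2,3)[OF s2, of xs R] by (auto simp: disj_union_def)
  next
    fix R assume "R \<notin> \<tau>p"
    then show "rel (disj_union M N) R = {}" using is_strucD(4)[OF s1] is_strucD(4)[OF s2] by (simp add: disj_union_def)
  qed
next
  case (recol M Pi Pj)
  then have s1: "is_struc \<tau>p M" by auto
  show ?case
  proof (rule is_strucI)
    show "finite (univ (recolor Pi Pj M))" using is_strucD(1)[OF s1] by (simp add: recolor_def)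
  next
    fix R xs assume a: "xs \<in> rel (recolor Pi Pj M) R"
    have "(R = Pj \<and> (xs \<in> rel M Pi \<or> xs \<in> rel M Pj)) \<or> (R \<noteq> Pj \<and> R \<noteq> Pi \<and> xs \<in> rel M R)"
      using a by (auto simp: recolor_def split: if_splits)
    then show "length xs = ar R \<and> set xs \<subseteq> univ (recolor Pi Pj M)"
      using is_strucD(2,3)[OF s1, of xs Pi] is_strucD(2,3)[OF s1, of xs Pj] is_strucD(2,3)[OF s1, of xs R] recol.hyps
      by (auto simp: recolor_def)
  next
    fix R assume "R \<notin> \<tau>p"
    then show "rel (recolor Pi Pj M) R = {}" using is_strucD(4)[OF s1, of R] recol.hyps by (auto simp: recolor_def)
  qed
next
  case (modif M R B)
  then have s1: "is_struc \<tau>p M" by auto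
  show ?case
  proof (rule is_strucI)
    show "finite (univ (modify R B M))" using is_strucD(1)[OF s1] by (simp add: modify_def)
  next
    fix R' xs assume a: "xs \<in> rel (modify R B M) R'"
    show "length xs = ar R' \<and> set xs \<subseteq> univ (modify R B M)"
    proof (cases "R' = R")
      case True then show ?thesis using a by (simp add: modify_def)
    next
      case False then show ?thesis using a is_strucD(2,3)[OF s1, of xs R'] by (simp add: modify_def)
    qed
  next
    fix R' assume "R' \<notin> \<tau>p"
    then show "rel (modify R B M) R' = {}" using is_strucD(4)[OF s1, of R'] modif.hyps by (auto simp: modify_def)
  qed
qed

lemma pw_uops: "M \<in> pw_closure \<tau> \<tau>p P \<Longrightarrow> \<forall>u\<in>set ops. uop_ok \<tau> \<tau>p u \<Longrightarrow> apply_uops ops M \<in> pw_closure \<tau> \<tau>p P"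
  unfolding apply_uops_def
proof (induction ops arbitrary: M)
  case (Cons u ops)
  have "apply_uop u M \<in> pw_closure \<tau> \<tau>p P"
  proof (cases u)
    case (URec Pi Pj)
    then show ?thesis using Cons.prems by (auto intro: pw_closure.recol)
  next
    case (UMod R B)
    then show ?thesis using Cons.prems by (auto intro: pw_closure.modif)
  qed
  then show ?case using Cons by simp
qed simp



lemma map_nth_map2: "\<forall>v\<in>set vs. v < length xs \<Longrightarrow> map (\<lambda>v. map h xs ! v) vs = map h (map (\<lambda>v. xs ! v) vs)"
  by (induction vs) auto

lemma qf_iso: "iso h M N \<Longrightarrow> is_struc \<sigma> M \<Longrightarrow> set xs \<subseteq> univ M \<Longrightarrow> qf_ok \<sigma>' (length xs) \<psi>
   \<Longrightarrow> qf_holds N (map h xs) \<psi> = qf_holds M xs \<psi>"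
proof (induction \<psi>)
  case (QEq i j)
  have inj: "inj_on h (univ M)" using QEq by (auto simp: iso_def bij_betw_def)
  have "xs ! i \<in> univ M" "xs ! j \<in> univ M" using QEq by auto
  then show ?case using QEq inj by (auto simp: inj_on_eq_iff)
next
  case (QRel R vs)
  have inj: "inj_on h (univ M)" using QRel by (auto simp: iso_def bij_betw_def)
  have r: "rel N R = map h ` rel M R" using QRel.prems(1) unfolding iso_def by blast
  have e: "map (\<lambda>v. map h xs ! v) vs = map h (map (\<lambda>v. xs ! v) vs)" using QRel by (intro map_nth_map2) auto
  have s1: "set (map (\<lambda>v. xs ! v) vs) \<subseteq> univ M" using QRel by auto
  have "map h ys = map h (map (\<lambda>v. xs ! v) vs) \<longleftrightarrow> ys = map (\<lambda>v. xs ! v) vs" if "ys \<in> rel M R" for ys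
  proof -
    have "set ys \<subseteq> univ M" using is_strucD(3)[OF QRel.prems(2) that] .
    then have "inj_on h (set ys \<union> set (map (\<lambda>v. xs ! v) vs))" using inj s1 by (rule_tac inj_on_subset) auto
    then show ?thesis by (rule inj_on_map_eq_map)
  qed
  then have k: "map h (map (\<lambda>v. xs!v) vs) \<in> map h ` rel M R \<longleftrightarrow> map (\<lambda>v. xs!v) vs \<in> rel M R"
    by (metis (no_types, lifting) image_iff)
  have "qf_holds N (map h xs) (QRel R vs) \<longleftrightarrow> map h (map (\<lambda>v. xs!v) vs) \<in> map h ` rel M R"
    by (simp only: qf_holds.simps e r)
  also have "\<dots> \<longleftrightarrow> qf_holds M xs (QRel R vs)" using k by (simp only: qf_holds.simps)
  finally show ?case .
qed auto

lemma reinterp_iso: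
  assumes i: "iso h M N" and s: "is_struc \<sigma> M" and wf: "phi_wf \<sigma> \<phi>"
  shows "iso h (reinterp \<sigma> \<phi> M) (reinterp \<sigma> \<phi> N)"
proof -
  have b: "bij_betw h (univ M) (univ N)" using i by (auto simp: iso_def)
  have "rel (reinterp \<sigma> \<phi> N) R = map h ` rel (reinterp \<sigma> \<phi> M) R" for R
  proof (cases "R \<in> \<sigma>")
    case True
    have ok: "qf_ok \<sigma> (ar R) (\<phi> R)" using wf True by (auto simp: phi_wf_def)
    show ?thesis
    proof (rule set_eqI, rule iffI)
      fix ys assume "ys \<in> rel (reinterp \<sigma> \<phi> N) R"
      then have y: "length ys = ar R" "set ys \<subseteq> univ N" "qf_holds N ys (\<phi> R)" using True by (auto simp: reinterp_def)
      define xs where "xs = map (inv_into (univ M) h) ys"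
      have sx: "set xs \<subseteq> univ M" unfolding xs_def using y(2) bij_betw_imp_surj_on[OF b]
        by (auto simp: subset_iff) (metis inv_into_into)
      have mx: "map h xs = ys" unfolding xs_def using y(2) bij_betw_imp_surj_on[OF b]
        by (induction ys) (auto intro: f_inv_into_f)
      have "qf_holds M xs (\<phi> R)" using qf_iso[OF i s sx, of \<sigma> "\<phi> R"] y mx ok by (simp add: xs_def)
      then have "xs \<in> rel (reinterp \<sigma> \<phi> M) R" using True sx y(1) by (auto simp: reinterp_def xs_def)
      then show "ys \<in> map h ` rel (reinterp \<sigma> \<phi> M) R" using mx by blast
    next
      fix ys assume "ys \<in> map h ` rel (reinterp \<sigma> \<phi> M) R"
      then obtain xs where ys: "ys = map h xs" and x: "length xs = ar R" "set xs \<subseteq> univ M" "qf_holds M xs (\<phi> R)"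
        using True by (auto simp: reinterp_def)
      have "qf_holds N ys (\<phi> R)" using qf_iso[OF i s x(2), of \<sigma> "\<phi> R"] x ok ys by simp
      moreover have "set ys \<subseteq> univ N" using x(2) ys bij_betw_imp_surj_on[OF b] by auto
      ultimately show "ys \<in> rel (reinterp \<sigma> \<phi> N) R" using True x(1) ys by (auto simp: reinterp_def)
    qed
  next
    case False
    then show ?thesis by (simp add: reinterp_def)
  qed
  then show ?thesis using b by (simp add: iso_def reinterp_def)
qed



fun ev :: "nat set \<Rightarrow> nat set \<Rightarrow> patom set \<Rightarrow> tatom set \<Rightarrow> tatom set \<Rightarrow> qf \<Rightarrow> bool" where
  "ev w1 w2 p q1 q2 QTrue = True"
| "ev w1 w2 p q1 q2 (QEq i j) = (PEq (PVar i) (PVar j) \<in> p)"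
| "ev w1 w2 p q1 q2 (QRel R vs) = ((set vs \<subseteq> w1 \<and> TRel R vs \<in> q1) \<or> (set vs \<subseteq> w2 \<and> TRel R vs \<in> q2))"
| "ev w1 w2 p q1 q2 (QNot a) = (\<not> ev w1 w2 p q1 q2 a)"
| "ev w1 w2 p q1 q2 (QAnd a b) = (ev w1 w2 p q1 q2 a \<and> ev w1 w2 p q1 q2 b)"

lemma ev_correct:
  assumes s1: "is_struc \<sigma> M1" and s2: "is_struc \<sigma> M2"
  shows "qf_ok \<sigma> (length xs) \<psi> \<Longrightarrow>
    ev (wset M1 xs) (wset M2 xs) (ptype (M1, []) (M2, []) xs) (qtype \<sigma> M1 xs (wset M1 xs)) (qtype \<sigma> M2 xs (wset M2 xs)) \<psi>
    = qf_holds (disj_union M1 M2) xs \<psi>"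
proof (induction \<psi>)
  case (QEq i j)
  then show ?case by (simp add: ptype_def)
next
  case (QRel R vs)
  have a: "map (\<lambda>v. xs!v) vs \<in> rel M R \<longleftrightarrow> set vs \<subseteq> wset M xs \<and> TRel R vs \<in> qtype \<sigma> M xs (wset M xs)"
    if s: "is_struc \<sigma> M" for M
  proof
    assume h: "map (\<lambda>v. xs!v) vs \<in> rel M R"
    have "set vs \<subseteq> wset M xs" using is_strucD(3)[OF s h] QRel by (auto simp: wset_def)
    then show "set vs \<subseteq> wset M xs \<and> TRel R vs \<in> qtype \<sigma> M xs (wset M xs)"
      using QRel h by (auto simp: qtype_def)
  qed (auto simp: qtype_def)
  show ?case using a[OF s1] a[OF s2] by (simp add: disj_union_def)
qed auto

definition NN :: "sym set \<Rightarrow> nat" where "NN \<sigma> = sum ar \<sigma>"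
definition PA :: "nat \<Rightarrow> patom set" where "PA n = {a. patom_ok n 0 a}"
definition TA :: "sym set \<Rightarrow> nat \<Rightarrow> tatom set" where "TA \<sigma> n = {a. tatom_ok \<sigma> {..<n} a}"
definition Dom :: "sym set \<Rightarrow> (sym \<times> nat set \<times> nat set \<times> patom set \<times> tatom set \<times> tatom set) set" where
  "Dom \<sigma> = \<sigma> \<times> Pow {..<NN \<sigma>} \<times> Pow {..<NN \<sigma>} \<times> Pow (PA (NN \<sigma>)) \<times> Pow (TA \<sigma> (NN \<sigma>)) \<times> Pow (TA \<sigma> (NN \<sigma>))"

definition Fph :: "sym set \<Rightarrow> (sym \<Rightarrow> qf) \<Rightarrow> sym \<Rightarrow> nat set \<Rightarrow> nat set \<Rightarrow> patom set \<Rightarrow> tatom set \<Rightarrow> tatom set \<Rightarrow> bool" where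
  "Fph \<sigma> \<phi> R w1 w2 p q1 q2 = ((R, w1, w2, p, q1, q2) \<in> Dom \<sigma> \<and> ev w1 w2 p q1 q2 (\<phi> R))"

definition mkop :: "(sym \<Rightarrow> nat set \<Rightarrow> nat set \<Rightarrow> patom set \<Rightarrow> tatom set \<Rightarrow> tatom set \<Rightarrow> bool) \<Rightarrow> addop" where
  "mkop F = \<lparr>ak = 0, ak1 = 0, ak2 = 0, aA1 = {}, aA2 = {}, ag1 = (\<lambda>_. 0), ag2 = (\<lambda>_. 0),
     aB1 = {}, aB2 = {}, aB = {}, ff = F\<rparr>"

lemma ar_le_NN: "finite \<sigma> \<Longrightarrow> R \<in> \<sigma> \<Longrightarrow> ar R \<le> NN \<sigma>"
  unfolding NN_def by (rule member_le_sum) auto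

lemma pterm_ok_mono: "pterm_ok n k t \<Longrightarrow> n \<le> n' \<Longrightarrow> pterm_ok n' k t"
  by (cases t) auto

lemma patom_ok_mono: "patom_ok n k a \<Longrightarrow> n \<le> n' \<Longrightarrow> patom_ok n' k a"
  by (cases a) (auto intro: pterm_ok_mono)

lemma tatom_ok_mono: "tatom_ok \<sigma> w a \<Longrightarrow> w \<subseteq> w' \<Longrightarrow> tatom_ok \<sigma> w' a"
  by (cases a) auto

lemma args_in_Dom:
  assumes "finite \<sigma>" "R \<in> \<sigma>" "length xs = ar R"
  shows "(R, wset M1 xs, wset M2 xs, ptype (M1, []) (M2, []) xs, qtype \<sigma> M1 xs (wset M1 xs), qtype \<sigma> M2 xs (wset M2 xs)) \<in> Dom \<sigma>"
proof -
  have l: "length xs \<le> NN \<sigma>" using ar_le_NN[OF assms(1,2)] assms(3) by simp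
  have w: "wset M xs \<subseteq> {..<NN \<sigma>}" for M using l by (auto simp: wset_def)
  have p: "ptype (M1, []) (M2, []) xs \<subseteq> PA (NN \<sigma>)" using l
    by (auto simp: ptype_def PA_def intro: patom_ok_mono)
  have q: "qtype \<sigma> M xs (wset M xs) \<subseteq> TA \<sigma> (NN \<sigma>)" for M using w[of M]
    by (auto simp: qtype_def TA_def intro: tatom_ok_mono)
  show ?thesis using assms w p q by (simp add: Dom_def)
qed

lemma mkop_ff: "ff (mkop F) = F" by (simp add: mkop_def)
lemma mkop_ak: "ak (mkop F) = 0" by (simp add: mkop_def)
lemma univ_disj_union: "univ (disj_union M N) = univ M \<union> univ N" by (simp add: disj_union_def)

lemma union_sum:
  assumes fin: "finite \<sigma>" and s1: "is_struc \<sigma> M1" and s2: "is_struc \<sigma> M2" and wf: "phi_wf \<sigma> \<phi>"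
  shows "add_sum \<sigma> (mkop (Fph \<sigma> \<phi>)) (M1, []) (M2, []) = (reinterp \<sigma> \<phi> (disj_union M1 M2), [])"
proof -
  have U: "add_univ (mkop (Fph \<sigma> \<phi>)) (M1, []) (M2, []) = univ M1 \<union> univ M2"
    by (simp add: add_univ_def mkop_def)
  have "{xs. length xs = ar R \<and> set xs \<subseteq> univ M1 \<union> univ M2 \<and>
          Fph \<sigma> \<phi> R (wset M1 xs) (wset M2 xs) (ptype (M1, []) (M2, []) xs)
               (qtype \<sigma> M1 xs (wset M1 xs)) (qtype \<sigma> M2 xs (wset M2 xs))}
      = {xs. length xs = ar R \<and> set xs \<subseteq> univ M1 \<union> univ M2 \<and> qf_holds (disj_union M1 M2) xs (\<phi> R)}"
    if R: "R \<in> \<sigma>" for R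
  proof (rule Collect_cong)
    fix xs
    show "(length xs = ar R \<and> set xs \<subseteq> univ M1 \<union> univ M2 \<and>
          Fph \<sigma> \<phi> R (wset M1 xs) (wset M2 xs) (ptype (M1, []) (M2, []) xs)
               (qtype \<sigma> M1 xs (wset M1 xs)) (qtype \<sigma> M2 xs (wset M2 xs))) =
          (length xs = ar R \<and> set xs \<subseteq> univ M1 \<union> univ M2 \<and> qf_holds (disj_union M1 M2) xs (\<phi> R))"
    proof (cases "length xs = ar R")
      case True
      have ok: "qf_ok \<sigma> (length xs) (\<phi> R)" using wf R True by (simp add: phi_wf_def)
      show ?thesis using True args_in_Dom[OF fin R True, of M1 M2] ev_correct[OF s1 s2 ok]
        by (simp add: Fph_def)
    qed simp
  qed
  then have E: "(\<lambda>R. if R \<in> \<sigma> then {xs. length xs = ar R \<and> set xs \<subseteq> univ M1 \<union> univ M2 \<and>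
          Fph \<sigma> \<phi> R (wset M1 xs) (wset M2 xs) (ptype (M1, []) (M2, []) xs)
               (qtype \<sigma> M1 xs (wset M1 xs)) (qtype \<sigma> M2 xs (wset M2 xs))} else {})
      = (\<lambda>R. if R \<in> \<sigma> then {xs. length xs = ar R \<and> set xs \<subseteq> univ M1 \<union> univ M2 \<and> qf_holds (disj_union M1 M2) xs (\<phi> R)} else {})"
    by (intro ext) auto
  have 1: "add_sum \<sigma> (mkop (Fph \<sigma> \<phi>)) (M1, []) (M2, []) = (\<lparr>univ = univ M1 \<union> univ M2, rel = (\<lambda>R. if R \<in> \<sigma> then {xs. length xs = ar R \<and> set xs \<subseteq> univ M1 \<union> univ M2 \<and>
          Fph \<sigma> \<phi> R (wset M1 xs) (wset M2 xs) (ptype (M1, []) (M2, []) xs)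
               (qtype \<sigma> M1 xs (wset M1 xs)) (qtype \<sigma> M2 xs (wset M2 xs))} else {})\<rparr>, [])"
    unfolding add_sum_def Let_def fst_conv snd_conv U mkop_ff mkop_ak by (simp only: upt_0 list.map(1))
  have 2: "reinterp \<sigma> \<phi> (disj_union M1 M2) = \<lparr>univ = univ M1 \<union> univ M2, rel = (\<lambda>R. if R \<in> \<sigma> then {xs. length xs = ar R \<and> set xs \<subseteq> univ M1 \<union> univ M2 \<and> qf_holds (disj_union M1 M2) xs (\<phi> R)} else {})\<rparr>"
    by (simp only: reinterp_def univ_disj_union)
  show ?thesis unfolding 1 2 E ..
qed



lemma pterm_ok0: "pterm_ok n 0 t \<Longrightarrow> t \<in> PVar ` {..<n}"
  by (cases t) auto

lemma finite_PA: "finite (PA n)"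
proof -
  let ?T = "PVar ` {..<n}"
  have "PA n \<subseteq> (\<lambda>(s, t). PEq s t) ` (?T \<times> ?T) \<union> PIn1 ` ?T \<union> PIn2 ` ?T"
  proof
    fix a assume "a \<in> PA n"
    then have a: "patom_ok n 0 a" by (simp add: PA_def)
    show "a \<in> (\<lambda>(s, t). PEq s t) ` (?T \<times> ?T) \<union> PIn1 ` ?T \<union> PIn2 ` ?T"
    proof (cases a)
      case (PEq s t)
      then have "s \<in> ?T" "t \<in> ?T" using a pterm_ok0 by auto
      then show ?thesis using PEq by blast
    next
      case (PIn1 t)
      then have "t \<in> ?T" using a pterm_ok0 by auto
      then show ?thesis using PIn1 by blast
    next
      case (PIn2 t)
      then have "t \<in> ?T" using a pterm_ok0 by auto
      then show ?thesis using PIn2 by blast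
    qed
  qed
  then show ?thesis by (rule finite_subset) auto
qed

lemma finite_TA: "finite \<sigma> \<Longrightarrow> finite (TA \<sigma> n)"
proof -
  assume fin: "finite \<sigma>"
  let ?L = "{vs. set vs \<subseteq> {..<n} \<and> length vs \<le> NN \<sigma>}"
  have "TA \<sigma> n \<subseteq> (\<lambda>(i, j). TEq i j) ` ({..<n} \<times> {..<n}) \<union> (\<lambda>(R, vs). TRel R vs) ` (\<sigma> \<times> ?L)"
  proof
    fix a assume "a \<in> TA \<sigma> n"
    then have a: "tatom_ok \<sigma> {..<n} a" by (simp add: TA_def)
    show "a \<in> (\<lambda>(i, j). TEq i j) ` ({..<n} \<times> {..<n}) \<union> (\<lambda>(R, vs). TRel R vs) ` (\<sigma> \<times> ?L)"
    proof (cases a)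
      case (TEq i j)
      then show ?thesis using a by auto
    next
      case (TRel R vs)
      then have "R \<in> \<sigma>" "vs \<in> ?L" using a ar_le_NN[OF fin, of R] by auto
      then show ?thesis using TRel by blast
    qed
  qed
  moreover have "finite ?L" by (rule finite_lists_length_le) simp
  ultimately show ?thesis using fin by (rule_tac finite_subset) auto
qed

lemma finite_Dom: "finite \<sigma> \<Longrightarrow> finite (Dom \<sigma>)"
  unfolding Dom_def using finite_PA finite_TA by auto

lemma finite_canon:
  assumes "finite D"
  shows "finite {F :: 'a \<Rightarrow> 'b \<Rightarrow> 'c \<Rightarrow> 'd \<Rightarrow> 'e \<Rightarrow> 'f \<Rightarrow> bool. \<forall>a b c d e f. F a b c d e f \<longrightarrow> (a, b, c, d, e, f) \<in> D}"
    (is "finite ?C")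
proof -
  let ?g = "\<lambda>F. {t \<in> D. case t of (a, b, c, d, e, f) \<Rightarrow> F a b c d e f}"
  have "inj_on ?g ?C"
  proof (rule inj_onI)
    fix F G assume F: "F \<in> ?C" and G: "G \<in> ?C" and e: "?g F = ?g G"
    show "F = G"
    proof (intro ext iffI)
      fix a b c d e' f assume "F a b c d e' f"
      then have "(a, b, c, d, e', f) \<in> ?g F" using F by auto
      then have "(a, b, c, d, e', f) \<in> ?g G" using e by simp
      then show "G a b c d e' f" by simp
    next
      fix a b c d e' f assume "G a b c d e' f"
      then have "(a, b, c, d, e', f) \<in> ?g G" using G by auto
      then have "(a, b, c, d, e', f) \<in> ?g F" using e by simp
      then show "F a b c d e' f" by simp
    qed
  qed
  moreover have "?g ` ?C \<subseteq> Pow D" by auto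
  ultimately show ?thesis using assms by (meson finite_Pow_iff inj_on_finite)
qed

lemma Fph_canon: "\<forall>a b c d e f. Fph \<sigma> \<phi> a b c d e f \<longrightarrow> (a, b, c, d, e, f) \<in> Dom \<sigma>"
  by (simp add: Fph_def)

lemma finite_strucs:
  assumes fs: "finite \<sigma>" and fU: "finite U" and fu: "\<forall>u\<in>U. finite u"
  shows "finite {M. is_struc \<sigma> M \<and> univ M \<in> U}" (is "finite ?A")
proof -
  let ?L = "{xs. set xs \<subseteq> \<Union>U \<and> length xs \<le> NN \<sigma>}"
  let ?g = "\<lambda>M. (univ M, {(R, xs). xs \<in> rel M R})"
  have "inj_on ?g ?A"
  proof (rule inj_onI)
    fix M N assume "M \<in> ?A" "N \<in> ?A" and e: "?g M = ?g N"
    have u: "univ M = univ N" using e by simp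
    have r: "rel M = rel N"
    proof (intro ext set_eqI)
      fix R xs
      have "(R, xs) \<in> {(R, xs). xs \<in> rel M R} \<longleftrightarrow> (R, xs) \<in> {(R, xs). xs \<in> rel N R}" using e by simp
      then show "xs \<in> rel M R \<longleftrightarrow> xs \<in> rel N R" by simp
    qed
    show "M = N" using u r by (intro struc.equality) auto
  qed
  moreover have "?g ` ?A \<subseteq> U \<times> Pow (\<sigma> \<times> ?L)"
  proof
    fix y assume "y \<in> ?g ` ?A"
    then obtain M where M: "is_struc \<sigma> M" "univ M \<in> U" and y: "y = ?g M" by blast
    have "{(R, xs). xs \<in> rel M R} \<subseteq> \<sigma> \<times> ?L"
    proof
      fix t assume "t \<in> {(R, xs). xs \<in> rel M R}"
      then obtain R xs where t: "t = (R, xs)" and x: "xs \<in> rel M R" by blast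
      have R: "R \<in> \<sigma>" using is_strucD(4)[OF M(1), of R] x by blast
      have "length xs = ar R" "set xs \<subseteq> univ M" using is_strucD(2,3)[OF M(1) x] by auto
      then have "xs \<in> ?L" using ar_le_NN[OF fs R] M(2) by auto
      then show "t \<in> \<sigma> \<times> ?L" using t R by blast
    qed
    then show "y \<in> U \<times> Pow (\<sigma> \<times> ?L)" using y M(2) by auto
  qed
  moreover have "finite ?L" using fU fu by (intro finite_lists_length_le) auto
  then have "finite (U \<times> Pow (\<sigma> \<times> ?L))" using fU fs by auto
  ultimately show ?thesis by (meson inj_on_finite)
qed



lemma apply_uops_Nil: "apply_uops [] M = M" by (simp add: apply_uops_def)
lemma apply_uops_Cons: "apply_uops (u # ops) M = apply_uops ops (apply_uop u M)" by (simp add: apply_uops_def)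

lemma applicable_mkop: "univ M1 \<inter> univ M2 = {} \<Longrightarrow> applicable (mkop F) (M1, []) (M2, [])"
  by (simp add: applicable_def mkop_def)

theorem mainTheorem4:
  fixes \<tau> :: "sym set" and m k :: nat and K :: "struc set"
  assumes "nice \<tau>"
    and "PW_class m k \<tau> K"
  shows "constructible m 0 \<tau> K"
proof -
  obtain \<tau>p P where voc: "vocab \<tau>p" and sub: "\<tau> \<subseteq> \<tau>p" and arm: "\<forall>R\<in>\<tau>p - \<tau>. ar R \<le> m"
    and finP: "finite P" and sP: "\<forall>M\<in>P. is_struc \<tau>p M" and K: "K = reduct \<tau> ` pw_closure \<tau> \<tau>p P"
    using assms(2) unfolding PW_class_def by blast
  have fin: "finite \<tau>p" using voc by (simp add: vocab_def)
  define C where "C = pw_closure \<tau> \<tau>p P"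
  have sC: "is_struc \<tau>p M" if "M \<in> C" for M using pw_struc[OF that[unfolded C_def] sP] .
  define P' where "P' = (\<lambda>M. (M, [] :: nat list)) ` {M \<in> C. univ M \<in> univ ` P}"
  define \<Phi> where "\<Phi> = {\<phi>. phi_wf \<tau>p \<phi> \<and> (\<exists>ops. (\<forall>u\<in>set ops. uop_ok \<tau> \<tau>p u) \<and>
                      (\<forall>M. is_struc \<tau>p M \<longrightarrow> apply_uops ops M = reinterp \<tau>p \<phi> M))}"
  define S where "S = mkop ` Fph \<tau>p ` \<Phi>"

  have A: "Mc \<in> (\<lambda>M. (M, [] :: nat list)) ` C" if "Mc \<in> add_closure \<tau>p P' S" for Mc
    using that
  proof (induction rule: add_closure.induct)
    case (base Mc)
    then show ?case unfolding P'_def by blast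
  next
    case (isom Mc h Nc)
    then obtain M where M: "M \<in> C" "Mc = (M, [])" by blast
    have "snd Nc = []" "iso h M (fst Nc)" using isom.hyps(2) M(2) by (auto simp: kiso_def)
    then have "fst Nc \<in> C" using M(1) unfolding C_def by (blast intro: pw_closure.isom)
    then show ?case using \<open>snd Nc = []\<close> by (metis image_eqI prod.collapse)
  next
    case (add s Mc1 Mc2)
    obtain M1 where M1: "M1 \<in> C" "Mc1 = (M1, [])" using add.IH(1) by blast
    obtain M2 where M2: "M2 \<in> C" "Mc2 = (M2, [])" using add.IH(2) by blast
    obtain \<phi> where ph: "\<phi> \<in> \<Phi>" and s: "s = mkop (Fph \<tau>p \<phi>)" using add.hyps(1) unfolding S_def by blast
    obtain ops where ops: "\<forall>u\<in>set ops. uop_ok \<tau> \<tau>p u" "\<forall>M. is_struc \<tau>p M \<longrightarrow> apply_uops ops M = reinterp \<tau>p \<phi> M"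
      and wf: "phi_wf \<tau>p \<phi>" using ph unfolding \<Phi>_def by blast
    have disj: "univ M1 \<inter> univ M2 = {}" using add.hyps(4) M1(2) M2(2) by (simp add: applicable_def)
    have U: "disj_union M1 M2 \<in> C" using M1(1) M2(1) disj unfolding C_def by (rule pw_closure.union)
    have "add_sum \<tau>p s Mc1 Mc2 = (reinterp \<tau>p \<phi> (disj_union M1 M2), [])"
      using union_sum[OF fin sC[OF M1(1)] sC[OF M2(1)] wf] s M1(2) M2(2) by simp
    also have "\<dots> = (apply_uops ops (disj_union M1 M2), [])" using ops(2) sC[OF U] by simp
    finally show ?case using pw_uops[OF U[unfolded C_def] ops(1)] unfolding C_def by blast
  qed

  have B: "\<forall>ops. (\<forall>u\<in>set ops. uop_ok \<tau> \<tau>p u) \<longrightarrow> (apply_uops ops M, []) \<in> add_closure \<tau>p P' S"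
    if "M \<in> C" for M
    using that[unfolded C_def]
  proof (induction rule: pw_closure.induct)
    case (base M)
    show ?case
    proof (intro allI impI)
      fix ops assume ops: "\<forall>u\<in>set ops. uop_ok \<tau> \<tau>p u"
      have "apply_uops ops M \<in> C" using pw_uops[OF pw_closure.base[OF base] ops] unfolding C_def .
      moreover have "univ (apply_uops ops M) \<in> univ ` P" using base univ_apply_uops by auto
      ultimately show "(apply_uops ops M, []) \<in> add_closure \<tau>p P' S"
        unfolding P'_def by (blast intro: add_closure.base)
    qed
  next
    case (isom M h N)
    show ?case
    proof (intro allI impI)
      fix ops assume ops: "\<forall>u\<in>set ops. uop_ok \<tau> \<tau>p u"
      obtain \<phi> where wf: "phi_wf \<tau>p \<phi>" and rep: "\<forall>M. is_struc \<tau>p M \<longrightarrow> apply_uops ops M = reinterp \<tau>p \<phi> M"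
        using uops_rep[OF ops] by blast
      have MC: "M \<in> C" "N \<in> C" using isom.hyps unfolding C_def by (auto intro: pw_closure.isom)
      have "(reinterp \<tau>p \<phi> M, []) \<in> add_closure \<tau>p P' S" using isom.IH ops rep sC[OF MC(1)] by metis
      moreover have "kiso h (reinterp \<tau>p \<phi> M, []) (reinterp \<tau>p \<phi> N, [])"
        using reinterp_iso[OF isom.hyps(2) sC[OF MC(1)] wf] by (simp add: kiso_def)
      ultimately have "(reinterp \<tau>p \<phi> N, []) \<in> add_closure \<tau>p P' S" by (rule add_closure.isom)
      then show "(apply_uops ops N, []) \<in> add_closure \<tau>p P' S" using rep sC[OF MC(2)] by simp
    qed
  next
    case (union M N)
    show ?case
    proof (intro allI impI)
      fix ops assume ops: "\<forall>u\<in>set ops. uop_ok \<tau> \<tau>p u"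
      obtain \<phi> where wf: "phi_wf \<tau>p \<phi>" and rep: "\<forall>M. is_struc \<tau>p M \<longrightarrow> apply_uops ops M = reinterp \<tau>p \<phi> M"
        using uops_rep[OF ops] by blast
      have MC: "M \<in> C" "N \<in> C" "disj_union M N \<in> C" using union.hyps unfolding C_def by (auto intro: pw_closure.union)
      have m1: "(M, []) \<in> add_closure \<tau>p P' S" using union.IH(1) apply_uops_Nil by (metis empty_iff list.set(1))
      have m2: "(N, []) \<in> add_closure \<tau>p P' S" using union.IH(2) apply_uops_Nil by (metis empty_iff list.set(1))
      have sS: "mkop (Fph \<tau>p \<phi>) \<in> S" unfolding S_def \<Phi>_def using wf rep ops by blast
      have "add_sum \<tau>p (mkop (Fph \<tau>p \<phi>)) (M, []) (N, []) \<in> add_closure \<tau>p P' S"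
        using sS m1 m2 applicable_mkop[OF union.hyps(3)] by (rule add_closure.add)
      moreover have "add_sum \<tau>p (mkop (Fph \<tau>p \<phi>)) (M, []) (N, []) = (apply_uops ops (disj_union M N), [])"
        using union_sum[OF fin sC[OF MC(1)] sC[OF MC(2)] wf] rep sC[OF MC(3)] by simp
      ultimately show "(apply_uops ops (disj_union M N), []) \<in> add_closure \<tau>p P' S" by simp
    qed
  next
    case (recol M Pi Pj)
    show ?case
    proof (intro allI impI)
      fix ops assume ops: "\<forall>u\<in>set ops. uop_ok \<tau> \<tau>p u"
      have "\<forall>u\<in>set (URec Pi Pj # ops). uop_ok \<tau> \<tau>p u" using ops recol.hyps by auto
      then have "(apply_uops (URec Pi Pj # ops) M, []) \<in> add_closure \<tau>p P' S" using recol.IH by blast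
      then show "(apply_uops ops (recolor Pi Pj M), []) \<in> add_closure \<tau>p P' S" by (simp add: apply_uops_Cons)
    qed
  next
    case (modif M R B)
    show ?case
    proof (intro allI impI)
      fix ops assume ops: "\<forall>u\<in>set ops. uop_ok \<tau> \<tau>p u"
      have "\<forall>u\<in>set (UMod R B # ops). uop_ok \<tau> \<tau>p u" using ops modif.hyps by auto
      then have "(apply_uops (UMod R B # ops) M, []) \<in> add_closure \<tau>p P' S" using modif.IH by blast
      then show "(apply_uops ops (modify R B M), []) \<in> add_closure \<tau>p P' S" by (simp add: apply_uops_Cons)
    qed
  qed

  have AC: "add_closure \<tau>p P' S = (\<lambda>M. (M, [] :: nat list)) ` C"
  proof
    show "add_closure \<tau>p P' S \<subseteq> (\<lambda>M. (M, [] :: nat list)) ` C" using A by blast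
  next
    show "(\<lambda>M. (M, [] :: nat list)) ` C \<subseteq> add_closure \<tau>p P' S"
    proof
      fix Mc assume "Mc \<in> (\<lambda>M. (M, [] :: nat list)) ` C"
      then obtain M where "M \<in> C" "Mc = (M, [])" by blast
      then show "Mc \<in> add_closure \<tau>p P' S" using B[of M] apply_uops_Nil by (metis empty_iff list.set(1))
    qed
  qed

  have finP': "finite P'"
  proof -
    have "{M \<in> C. univ M \<in> univ ` P} \<subseteq> {M. is_struc \<tau>p M \<and> univ M \<in> univ ` P}" using sC by auto
    moreover have "finite {M. is_struc \<tau>p M \<and> univ M \<in> univ ` P}"
      using fin finP sP is_strucD(1) by (intro finite_strucs) auto
    ultimately show ?thesis unfolding P'_def by (meson finite_imageI finite_subset)
  qed
  have kP': "\<forall>Mc\<in>P'. \<exists>k0\<le>0. is_kstruc \<tau>p k0 Mc"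
    unfolding P'_def using sC by (auto simp: is_kstruc_def)
  have finS: "finite S"
  proof -
    have "Fph \<tau>p ` \<Phi> \<subseteq> {F. \<forall>a b c d e f. F a b c d e f \<longrightarrow> (a, b, c, d, e, f) \<in> Dom \<tau>p}"
      by (intro image_subsetI CollectI Fph_canon)
    then have "finite (Fph \<tau>p ` \<Phi>)" by (rule finite_subset[OF _ finite_canon[OF finite_Dom[OF fin]]])
    then show ?thesis unfolding S_def by (rule finite_imageI)
  qed
  have wfS: "\<forall>s\<in>S. addop_wf s \<and> ak s \<le> 0 \<and> ak1 s \<le> 0 \<and> ak2 s \<le> 0"
    unfolding S_def by (auto simp: mkop_def addop_wf_def)
  have KK: "K = (\<lambda>Mc. reduct \<tau> (fst Mc)) ` add_closure \<tau>p P' S"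
    unfolding AC K C_def by (simp add: image_image)
  show ?thesis unfolding constructible_def
    using voc sub arm finP' kP' finS wfS KK by blast
qed

end
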